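(* Let $X,Y\in\mathcal L^2$. Then $(X,Y)\in\mathrm{IC}_0$ if and only if $(X,Y)$ is quasi-independent.
   Context: All random variables live on an atomless probability space. $\mathcal L^2$ denotes the set of non-degenerate real random variables with finite variance. A function $g:\mathbb R\to\mathbb R$ is admissible for $(X,Y)$ if it is measurable and $g(X),g(Y)\in\mathcal L^2$. For $r\in[-1,1]$, $(X,Y)\in\mathrm{IC}_r$ ($(X,Y)$ has invariant correlation $r$) means $X,Y\in\mathcal L^2$ and $\mathrm{Corr}(X,Y)=\mathrm{Corr}(g(X),g(Y))=r$ for all admissible $g$. A random vector $(X,Y)$ with joint distribution function $H$ and marginal distribution functions $F$ (of $X$) and $G$ (of $Y$) is quasi-independent if $\frac{H(x,y)+H(y,x)}{2}=\frac12F(x)G(y)+\frac12F(y)G(x)$ for all $x,y\in\mathbb R$. *)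

theory Defs
  imports "HOL-Probability.Probability"
begin

definition atomless :: "'a measure \<Rightarrow> bool" where
  "atomless M \<longleftrightarrow> (\<forall>A\<in>sets M. measure M A > 0 \<longrightarrow>
     (\<exists>B\<in>sets M. B \<subseteq> A \<and> 0 < measure M B \<and> measure M B < measure M A))"

definition L2 :: "'a measure \<Rightarrow> ('a \<Rightarrow> real) \<Rightarrow> bool" where
  "L2 M X \<longleftrightarrow> X \<in> borel_measurable M \<and> integrable M (\<lambda>\<omega>. (X \<omega>)\<^sup>2)
     \<and> \<not> (\<exists>c. AE \<omega> in M. X \<omega> = c)"

definition cov :: "'a measure \<Rightarrow> ('a \<Rightarrow> real) \<Rightarrow> ('a \<Rightarrow> real) \<Rightarrow> real" where
  "cov M X Y = (\<integral>\<omega>. (X \<omega> - (\<integral>\<omega>'. X \<omega>' \<partial>M)) * (Y \<omega> - (\<integral>\<omega>'. Y \<omega>' \<partial>M)) \<partial>M)"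

definition corr :: "'a measure \<Rightarrow> ('a \<Rightarrow> real) \<Rightarrow> ('a \<Rightarrow> real) \<Rightarrow> real" where
  "corr M X Y = cov M X Y / sqrt (cov M X X * cov M Y Y)"

definition admissible :: "'a measure \<Rightarrow> ('a \<Rightarrow> real) \<Rightarrow> ('a \<Rightarrow> real) \<Rightarrow> (real \<Rightarrow> real) \<Rightarrow> bool" where
  "admissible M X Y g \<longleftrightarrow> g \<in> borel_measurable borel \<and> L2 M (\<lambda>\<omega>. g (X \<omega>)) \<and> L2 M (\<lambda>\<omega>. g (Y \<omega>))"

definition IC :: "'a measure \<Rightarrow> real \<Rightarrow> ('a \<Rightarrow> real) \<Rightarrow> ('a \<Rightarrow> real) \<Rightarrow> bool" where
  "IC M r X Y \<longleftrightarrow> L2 M X \<and> L2 M Y \<and> corr M X Y = r \<and>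
     (\<forall>g. admissible M X Y g \<longrightarrow> corr M (\<lambda>\<omega>. g (X \<omega>)) (\<lambda>\<omega>. g (Y \<omega>)) = r)"

definition joint_cdf :: "'a measure \<Rightarrow> ('a \<Rightarrow> real) \<Rightarrow> ('a \<Rightarrow> real) \<Rightarrow> real \<Rightarrow> real \<Rightarrow> real" where
  "joint_cdf M X Y x y = measure M {\<omega> \<in> space M. X \<omega> \<le> x \<and> Y \<omega> \<le> y}"

definition cdf_of :: "'a measure \<Rightarrow> ('a \<Rightarrow> real) \<Rightarrow> real \<Rightarrow> real" where
  "cdf_of M X x = measure M {\<omega> \<in> space M. X \<omega> \<le> x}"

definition quasi_independent :: "'a measure \<Rightarrow> ('a \<Rightarrow> real) \<Rightarrow> ('a \<Rightarrow> real) \<Rightarrow> bool" where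
  "quasi_independent M X Y \<longleftrightarrow> (\<forall>x y.
     (joint_cdf M X Y x y + joint_cdf M X Y y x) / 2 =
       1/2 * cdf_of M X x * cdf_of M Y y + 1/2 * cdf_of M X y * cdf_of M Y x)"

end

theory Submission
  imports Defs
begin

lemma abs_mult_le_sq: "\<bar>a * b\<bar> \<le> a\<^sup>2 + b\<^sup>2" for a b :: real
proof -
  have "0 \<le> (\<bar>a\<bar> - \<bar>b\<bar>)\<^sup>2" by simp
  then have "2 * (\<bar>a\<bar> * \<bar>b\<bar>) \<le> \<bar>a\<bar>\<^sup>2 + \<bar>b\<bar>\<^sup>2" by (simp add: power2_eq_square algebra_simps)
  moreover have "0 \<le> \<bar>a\<bar> * \<bar>b\<bar>" by simp
  moreover have "\<bar>a * b\<bar> = \<bar>a\<bar> * \<bar>b\<bar>" by (simp add: abs_mult)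
  moreover have "\<bar>a\<bar>\<^sup>2 = a\<^sup>2" "\<bar>b\<bar>\<^sup>2 = b\<^sup>2" by simp_all
  ultimately show ?thesis by linarith
qed

lemma rect_mm:
  fixes K :: "(real \<times> real) measure"
  assumes fin: "finite_measure K" and sK: "sets K = sets (borel \<Otimes>\<^sub>M borel)"
  shows "measure K ((\<lambda>p. (min (fst p) (snd p), max (fst p) (snd p))) -` {..(s,t)})
    = measure K ({..min s t} \<times> {..t}) + measure K ({..t} \<times> {..min s t})
      - measure K ({..min s t} \<times> {..min s t})"
proof -
  let ?m = "min s t"
  have eq: "(\<lambda>p. (min (fst p) (snd p), max (fst p) (snd p))) -` {..(s,t)}
      = ({..?m} \<times> {..t}) \<union> ({..t} \<times> {..?m})"
    by (auto simp: min_def max_def split: if_splits)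
  have int: "({..?m} \<times> {..t}) \<inter> ({..t} \<times> {..?m}) = {..?m} \<times> {..?m}"
    by auto
  have meas: "{..a} \<times> {..b} \<in> fmeasurable K" for a b :: real
    using finite_measure.fmeasurable_eq_sets[OF fin] sK by auto
  show ?thesis
    unfolding eq using measure_Un3[OF meas meas] int by simp
qed

context prob_space
begin

lemma cov_AE_const:
  assumes [measurable]: "A \<in> borel_measurable M" "B \<in> borel_measurable M"
    and ae: "AE \<omega> in M. A \<omega> = c"
  shows "cov M A B = 0" "cov M B A = 0"
proof -
  have "(\<integral>\<omega>. A \<omega> \<partial>M) = (\<integral>\<omega>. c \<partial>M)"
    by (rule integral_cong_AE) (use ae in auto)
  then have e: "(\<integral>\<omega>. A \<omega> \<partial>M) = c" by (simp add: prob_space)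
  have "cov M A B = (\<integral>\<omega>. 0 \<partial>M)"
    unfolding cov_def e by (rule integral_cong_AE) (use ae in auto)
  then show "cov M A B = 0" by simp
  have "cov M B A = (\<integral>\<omega>. 0 \<partial>M)"
    unfolding cov_def e by (rule integral_cong_AE) (use ae in auto)
  then show "cov M B A = 0" by simp
qed

lemma var0:
  assumes [measurable]: "A \<in> borel_measurable M"
    and sq: "integrable M (\<lambda>\<omega>. (A \<omega>)\<^sup>2)" and v: "cov M A A = 0"
  shows "AE \<omega> in M. A \<omega> = (\<integral>\<omega>. A \<omega> \<partial>M)"
proof -
  have iA: "integrable M A" by (rule square_integrable_imp_integrable[OF _ sq]) simp
  define e where "e = (\<integral>\<omega>. A \<omega> \<partial>M)"
  have fe: "(\<lambda>\<omega>. (A \<omega> - e) * (A \<omega> - e)) = (\<lambda>\<omega>. (A \<omega>)\<^sup>2 - 2 * e * A \<omega> + e\<^sup>2)"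
    by (auto simp: power2_eq_square algebra_simps)
  have int: "integrable M (\<lambda>\<omega>. (A \<omega> - e) * (A \<omega> - e))"
    unfolding fe using sq iA by auto
  have "AE \<omega> in M. (A \<omega> - e) * (A \<omega> - e) = 0"
    using integral_nonneg_eq_0_iff_AE[OF int] v unfolding cov_def e_def by auto
  then show ?thesis by eventually_elim (simp add: e_def)
qed

lemma cov_zero_of_corr:
  assumes [measurable]: "A \<in> borel_measurable M" "B \<in> borel_measurable M"
    and sqA: "integrable M (\<lambda>\<omega>. (A \<omega>)\<^sup>2)" and sqB: "integrable M (\<lambda>\<omega>. (B \<omega>)\<^sup>2)"
    and c: "corr M A B = 0"
  shows "cov M A B = 0"
proof (rule ccontr)
  assume ne: "cov M A B \<noteq> 0"
  with c have "sqrt (cov M A A * cov M B B) = 0" unfolding corr_def by simp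
  then have "cov M A A = 0 \<or> cov M B B = 0" by simp
  then show False
  proof
    assume "cov M A A = 0"
    from cov_AE_const(1)[OF _ _ var0[OF _ sqA this]] ne show False by simp
  next
    assume "cov M B B = 0"
    from cov_AE_const(2)[OF _ _ var0[OF _ sqB this]] ne show False by simp
  qed
qed

lemma cov_eq:
  assumes iA: "integrable M A" and iB: "integrable M B"
    and iAB: "integrable M (\<lambda>\<omega>. A \<omega> * B \<omega>)"
  shows "cov M A B = (\<integral>\<omega>. A \<omega> * B \<omega> \<partial>M) - (\<integral>\<omega>. A \<omega> \<partial>M) * (\<integral>\<omega>. B \<omega> \<partial>M)"
proof -
  define a where "a = (\<integral>\<omega>. A \<omega> \<partial>M)"
  define b where "b = (\<integral>\<omega>. B \<omega> \<partial>M)"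
  have fe: "(\<lambda>\<omega>. (A \<omega> - a) * (B \<omega> - b)) = (\<lambda>\<omega>. A \<omega> * B \<omega> - b * A \<omega> - a * B \<omega> + a * b)"
    by (auto simp: algebra_simps)
  have "cov M A B = (\<integral>\<omega>. A \<omega> * B \<omega> - b * A \<omega> - a * B \<omega> + a * b \<partial>M)"
    unfolding cov_def a_def[symmetric] b_def[symmetric] fe ..
  also have "\<dots> = (\<integral>\<omega>. A \<omega> * B \<omega> \<partial>M) - b * a - a * b + a * b"
    using iA iB iAB by (simp add: a_def b_def prob_space)
  finally show ?thesis by (simp add: a_def b_def)
qed

lemma cov_add4:
  assumes "integrable M A1" "integrable M A2" "integrable M B1" "integrable M B2"
    "integrable M (\<lambda>\<omega>. A1 \<omega> * B1 \<omega>)" "integrable M (\<lambda>\<omega>. A1 \<omega> * B2 \<omega>)"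
    "integrable M (\<lambda>\<omega>. A2 \<omega> * B1 \<omega>)" "integrable M (\<lambda>\<omega>. A2 \<omega> * B2 \<omega>)"
  shows "cov M (\<lambda>\<omega>. A1 \<omega> + A2 \<omega>) (\<lambda>\<omega>. B1 \<omega> + B2 \<omega>)
    = cov M A1 B1 + cov M A1 B2 + cov M A2 B1 + cov M A2 B2"
proof -
  have fe: "(\<lambda>\<omega>. (A1 \<omega> + A2 \<omega>) * (B1 \<omega> + B2 \<omega>)) =
      (\<lambda>\<omega>. A1 \<omega> * B1 \<omega> + A1 \<omega> * B2 \<omega> + A2 \<omega> * B1 \<omega> + A2 \<omega> * B2 \<omega>)"
    by (auto simp: algebra_simps)
  have i: "integrable M (\<lambda>\<omega>. (A1 \<omega> + A2 \<omega>) * (B1 \<omega> + B2 \<omega>))"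
    unfolding fe using assms by auto
  show ?thesis
    apply (subst cov_eq[OF _ _ i])
    using assms apply auto[2]
    apply (simp only: fe)
    using assms by (simp add: cov_eq algebra_simps)
qed

lemma IC0_cov_bounded:
  assumes ic: "IC M 0 X Y" and [measurable]: "g \<in> borel_measurable borel"
    "X \<in> borel_measurable M" "Y \<in> borel_measurable M" and bd: "\<And>t. \<bar>g t\<bar> \<le> K"
  shows "cov M (\<lambda>\<omega>. g (X \<omega>)) (\<lambda>\<omega>. g (Y \<omega>)) = 0"
proof -
  have b2: "norm ((g t)\<^sup>2) \<le> K\<^sup>2" for t
    using power_mono[OF bd[of t] abs_ge_zero, of 2] by simp
  have sqX: "integrable M (\<lambda>\<omega>. (g (X \<omega>))\<^sup>2)"
    by (rule integrable_const_bound[where B="K\<^sup>2"]) (use b2 in auto)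
  have sqY: "integrable M (\<lambda>\<omega>. (g (Y \<omega>))\<^sup>2)"
    by (rule integrable_const_bound[where B="K\<^sup>2"]) (use b2 in auto)
  show ?thesis
  proof (cases "admissible M X Y g")
    case True
    then have "corr M (\<lambda>\<omega>. g (X \<omega>)) (\<lambda>\<omega>. g (Y \<omega>)) = 0"
      using ic unfolding IC_def by blast
    then show ?thesis using cov_zero_of_corr sqX sqY by simp
  next
    case False
    then have "\<not> L2 M (\<lambda>\<omega>. g (X \<omega>)) \<or> \<not> L2 M (\<lambda>\<omega>. g (Y \<omega>))"
      unfolding admissible_def by auto
    then have "(\<exists>c. AE \<omega> in M. g (X \<omega>) = c) \<or> (\<exists>c. AE \<omega> in M. g (Y \<omega>) = c)"
      unfolding L2_def using sqX sqY by auto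
    then show ?thesis
    proof
      assume "\<exists>c. AE \<omega> in M. g (X \<omega>) = c"
      then obtain c where "AE \<omega> in M. g (X \<omega>) = c" by blast
      from cov_AE_const(1)[OF _ _ this] show ?thesis by simp
    next
      assume "\<exists>c. AE \<omega> in M. g (Y \<omega>) = c"
      then obtain c where "AE \<omega> in M. g (Y \<omega>) = c" by blast
      from cov_AE_const(2)[OF _ _ this] show ?thesis by simp
    qed
  qed
qed

lemma IC0_imp_QI:
  assumes ic: "IC M 0 X Y" and [measurable]: "X \<in> borel_measurable M" "Y \<in> borel_measurable M"
  shows "quasi_independent M X Y"
  unfolding quasi_independent_def
proof (intro allI)
  fix x y :: real
  define i where "i a = (\<lambda>t::real. if t \<le> a then 1 else (0::real))" for a
  have im[measurable]: "i a \<in> borel_measurable borel" for a unfolding i_def by measurable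
  have ib: "\<bar>i a t\<bar> \<le> 1" for a t unfolding i_def by simp
  have iX: "integrable M (\<lambda>\<omega>. i a (X \<omega>))" for a
    by (rule integrable_const_bound[where B=1]) (use ib in auto)
  have iY: "integrable M (\<lambda>\<omega>. i a (Y \<omega>))" for a
    by (rule integrable_const_bound[where B=1]) (use ib in auto)
  have iXY: "integrable M (\<lambda>\<omega>. i a (X \<omega>) * i b (Y \<omega>))" for a b
    by (rule integrable_const_bound[where B=1]) (auto simp: i_def)
  have J: "(\<integral>\<omega>. i a (X \<omega>) * i b (Y \<omega>) \<partial>M) = joint_cdf M X Y a b" for a b
  proof -
    have "(\<integral>\<omega>. i a (X \<omega>) * i b (Y \<omega>) \<partial>M)
        = (\<integral>\<omega>. indicator {\<omega>\<in>space M. X \<omega> \<le> a \<and> Y \<omega> \<le> b} \<omega> \<partial>M)"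
      by (rule Bochner_Integration.integral_cong) (auto simp: i_def indicator_def)
    also have "\<dots> = joint_cdf M X Y a b"
      unfolding joint_cdf_def by (simp add: Int_absorb2 subset_eq)
    finally show ?thesis .
  qed
  have FX: "(\<integral>\<omega>. i a (X \<omega>) \<partial>M) = cdf_of M X a" for a
  proof -
    have "(\<integral>\<omega>. i a (X \<omega>) \<partial>M) = (\<integral>\<omega>. indicator {\<omega>\<in>space M. X \<omega> \<le> a} \<omega> \<partial>M)"
      by (rule Bochner_Integration.integral_cong) (auto simp: i_def indicator_def)
    also have "\<dots> = cdf_of M X a"
      unfolding cdf_of_def by (simp add: Int_absorb2 subset_eq)
    finally show ?thesis .
  qed
  have GY: "(\<integral>\<omega>. i a (Y \<omega>) \<partial>M) = cdf_of M Y a" for a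
  proof -
    have "(\<integral>\<omega>. i a (Y \<omega>) \<partial>M) = (\<integral>\<omega>. indicator {\<omega>\<in>space M. Y \<omega> \<le> a} \<omega> \<partial>M)"
      by (rule Bochner_Integration.integral_cong) (auto simp: i_def indicator_def)
    also have "\<dots> = cdf_of M Y a"
      unfolding cdf_of_def by (simp add: Int_absorb2 subset_eq)
    finally show ?thesis .
  qed
  have C: "cov M (\<lambda>\<omega>. i a (X \<omega>)) (\<lambda>\<omega>. i b (Y \<omega>)) = joint_cdf M X Y a b - cdf_of M X a * cdf_of M Y b" for a b
    using cov_eq[OF iX iY iXY] J FX GY by simp
  have c1: "cov M (\<lambda>\<omega>. i a (X \<omega>)) (\<lambda>\<omega>. i a (Y \<omega>)) = 0" for a
    by (rule IC0_cov_bounded[OF ic im _ _ ib]) simp_all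
  have gb: "\<bar>i x t + i y t\<bar> \<le> 2" for t unfolding i_def by simp
  have c3: "cov M (\<lambda>\<omega>. i x (X \<omega>) + i y (X \<omega>)) (\<lambda>\<omega>. i x (Y \<omega>) + i y (Y \<omega>)) = 0"
  proof -
    have gm: "(\<lambda>t. i x t + i y t) \<in> borel_measurable borel" by measurable
    show ?thesis using IC0_cov_bounded[where g="\<lambda>t. i x t + i y t" and K=2, OF ic gm _ _ gb] by simp
  qed
  have "cov M (\<lambda>\<omega>. i x (X \<omega>) + i y (X \<omega>)) (\<lambda>\<omega>. i x (Y \<omega>) + i y (Y \<omega>))
     = cov M (\<lambda>\<omega>. i x (X \<omega>)) (\<lambda>\<omega>. i x (Y \<omega>)) + cov M (\<lambda>\<omega>. i x (X \<omega>)) (\<lambda>\<omega>. i y (Y \<omega>))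
       + cov M (\<lambda>\<omega>. i y (X \<omega>)) (\<lambda>\<omega>. i x (Y \<omega>)) + cov M (\<lambda>\<omega>. i y (X \<omega>)) (\<lambda>\<omega>. i y (Y \<omega>))"
    by (rule cov_add4) (use iX iY iXY in auto)
  then have "joint_cdf M X Y x y - cdf_of M X x * cdf_of M Y y
      + (joint_cdf M X Y y x - cdf_of M X y * cdf_of M Y x) = 0"
    using c1[of x] c1[of y] c3 C[of x y] C[of y x] by simp
  then show "(joint_cdf M X Y x y + joint_cdf M X Y y x) / 2 =
       1/2 * cdf_of M X x * cdf_of M Y y + 1/2 * cdf_of M X y * cdf_of M Y x"
    by simp
qed

lemma QI_cov:
  assumes qi: "quasi_independent M X Y"
    and [measurable]: "X \<in> borel_measurable M" "Y \<in> borel_measurable M" "g \<in> borel_measurable borel"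
    and sqX: "integrable M (\<lambda>\<omega>. (g (X \<omega>))\<^sup>2)" and sqY: "integrable M (\<lambda>\<omega>. (g (Y \<omega>))\<^sup>2)"
  shows "cov M (\<lambda>\<omega>. g (X \<omega>)) (\<lambda>\<omega>. g (Y \<omega>)) = 0"
proof -
  interpret MM: pair_prob_space M M
    unfolding pair_prob_space_def pair_sigma_finite_def
    using prob_space_axioms by (simp add: prob_space_imp_sigma_finite)
  define P where "P = (borel \<Otimes>\<^sub>M borel :: (real \<times> real) measure)"
  define mm where "mm = (\<lambda>p::real\<times>real. (min (fst p) (snd p), max (fst p) (snd p)))"
  define K1 where "K1 = distr M P (\<lambda>\<omega>. (X \<omega>, Y \<omega>))"
  define K2 where "K2 = distr (M \<Otimes>\<^sub>M M) P (\<lambda>(\<omega>, \<omega>'). (X \<omega>, Y \<omega>'))"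
  define N1 where "N1 = distr K1 P mm"
  define N2 where "N2 = distr K2 P mm"
  have m1[measurable]: "(\<lambda>\<omega>. (X \<omega>, Y \<omega>)) \<in> M \<rightarrow>\<^sub>M P" unfolding P_def by measurable
  have m2[measurable]: "(\<lambda>(\<omega>, \<omega>'). (X \<omega>, Y \<omega>')) \<in> M \<Otimes>\<^sub>M M \<rightarrow>\<^sub>M P" unfolding P_def by measurable
  have mmm[measurable]: "mm \<in> P \<rightarrow>\<^sub>M P" unfolding P_def mm_def by measurable
  have sP: "sets P = sigma_sets UNIV (range (\<lambda>a::real\<times>real. {..a}))"
  proof -
    have "sets P = sets (borel::(real\<times>real) measure)" unfolding P_def by (metis borel_prod)
    also have "\<dots> = sigma_sets UNIV (range (\<lambda>a::real\<times>real. {..a}))"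
      by (subst borel_eq_atMost) simp
    finally show ?thesis .
  qed
  have spP: "space P = UNIV" unfolding P_def by (simp add: space_pair_measure)
  have pK1: "prob_space K1" unfolding K1_def by (rule prob_space_distr) simp
  have pMM: "prob_space (M \<Otimes>\<^sub>M M)" by (rule prob_space_pair) (rule prob_space_axioms)+
  have pK2: "prob_space K2" unfolding K2_def by (rule prob_space.prob_space_distr[OF pMM]) simp
  have pN1: "prob_space N1" unfolding N1_def by (rule prob_space.prob_space_distr[OF pK1]) (simp add: K1_def)
  have pN2: "prob_space N2" unfolding N2_def by (rule prob_space.prob_space_distr[OF pK2]) (simp add: K2_def)
  have rect_sets: "{..a} \<times> {..b} \<in> sets P" for a b :: real
    unfolding P_def by measurable
  have atM_sets: "{..p} \<in> sets P" for p :: "real \<times> real"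
    unfolding sP by auto
  have R1: "measure K1 ({..a} \<times> {..b}) = joint_cdf M X Y a b" for a b
  proof -
    have "measure K1 ({..a} \<times> {..b}) = measure M ((\<lambda>\<omega>. (X \<omega>, Y \<omega>)) -` ({..a} \<times> {..b}) \<inter> space M)"
      unfolding K1_def by (rule measure_distr[OF m1 rect_sets])
    also have "(\<lambda>\<omega>. (X \<omega>, Y \<omega>)) -` ({..a} \<times> {..b}) \<inter> space M = {\<omega>\<in>space M. X \<omega> \<le> a \<and> Y \<omega> \<le> b}"
      by auto
    finally show ?thesis unfolding joint_cdf_def .
  qed
  have R2: "measure K2 ({..a} \<times> {..b}) = cdf_of M X a * cdf_of M Y b" for a b
  proof -
    have "measure K2 ({..a} \<times> {..b}) = measure (M \<Otimes>\<^sub>M M) ((\<lambda>(\<omega>, \<omega>'). (X \<omega>, Y \<omega>')) -` ({..a} \<times> {..b}) \<inter> space (M \<Otimes>\<^sub>M M))"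
      unfolding K2_def by (rule measure_distr[OF m2 rect_sets])
    also have "(\<lambda>(\<omega>, \<omega>'). (X \<omega>, Y \<omega>')) -` ({..a} \<times> {..b}) \<inter> space (M \<Otimes>\<^sub>M M)
        = {\<omega>\<in>space M. X \<omega> \<le> a} \<times> {\<omega>\<in>space M. Y \<omega> \<le> b}"
      by (auto simp: space_pair_measure)
    also have "measure (M \<Otimes>\<^sub>M M) ({\<omega>\<in>space M. X \<omega> \<le> a} \<times> {\<omega>\<in>space M. Y \<omega> \<le> b})
        = cdf_of M X a * cdf_of M Y b"
    proof -
      have "emeasure (M \<Otimes>\<^sub>M M) ({\<omega>\<in>space M. X \<omega> \<le> a} \<times> {\<omega>\<in>space M. Y \<omega> \<le> b})
          = ennreal (cdf_of M X a * cdf_of M Y b)"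
        by (simp add: emeasure_pair_measure_Times emeasure_eq_measure ennreal_mult cdf_of_def)
      then show ?thesis by (simp add: measure_def cdf_of_def)
    qed
    finally show ?thesis .
  qed
  have mmU: "measure N1 {..(s,t)} = measure N2 {..(s,t)}" for s t
  proof -
    have sK1: "sets K1 = sets (borel \<Otimes>\<^sub>M borel)" by (simp add: K1_def P_def)
    have sK2: "sets K2 = sets (borel \<Otimes>\<^sub>M borel)" by (simp add: K2_def P_def)
    have spK1: "space K1 = UNIV" by (simp add: K1_def spP)
    have spK2: "space K2 = UNIV" by (simp add: K2_def spP)
    have "measure N1 {..(s,t)} = measure K1 (mm -` {..(s,t)})"
      unfolding N1_def using measure_distr[of mm K1 P "{..(s,t)}"] atM_sets spK1 by (simp add: K1_def)
    also have "\<dots> = joint_cdf M X Y (min s t) t + joint_cdf M X Y t (min s t) - joint_cdf M X Y (min s t) (min s t)"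
      unfolding mm_def using rect_mm[OF prob_space.finite_measure[OF pK1] sK1] R1 by simp
    also have "\<dots> = cdf_of M X (min s t) * cdf_of M Y t + cdf_of M X t * cdf_of M Y (min s t)
        - cdf_of M X (min s t) * cdf_of M Y (min s t)"
    proof -
      have q1: "(joint_cdf M X Y (min s t) t + joint_cdf M X Y t (min s t)) / 2 =
         1/2 * cdf_of M X (min s t) * cdf_of M Y t + 1/2 * cdf_of M X t * cdf_of M Y (min s t)"
        using qi unfolding quasi_independent_def by blast
      have q2: "(joint_cdf M X Y (min s t) (min s t) + joint_cdf M X Y (min s t) (min s t)) / 2 =
         1/2 * cdf_of M X (min s t) * cdf_of M Y (min s t) + 1/2 * cdf_of M X (min s t) * cdf_of M Y (min s t)"
        using qi unfolding quasi_independent_def by blast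
      from q1 q2 show ?thesis by (simp add: field_simps; linarith)
    qed
    also have "\<dots> = measure K2 (mm -` {..(s,t)})"
      unfolding mm_def using rect_mm[OF prob_space.finite_measure[OF pK2] sK2] R2 by simp
    also have "\<dots> = measure N2 {..(s,t)}"
      unfolding N2_def using measure_distr[of mm K2 P "{..(s,t)}"] atM_sets spK2 by (simp add: K2_def)
    finally show ?thesis .
  qed
  have NN: "N1 = N2"
  proof (rule measure_eqI_generator_eq[where E="range (\<lambda>a::real\<times>real. {..a})" and \<Omega>=UNIV
        and A="\<lambda>i. {..(real i, real i)}"])
    show "Int_stable (range (\<lambda>a::real\<times>real. {..a}))"
    proof (rule Int_stableI_image)
      fix i j :: "real\<times>real"
      show "\<exists>k\<in>UNIV. {..i} \<inter> {..j} = {..k}"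
        by (rule bexI[of _ "inf i j"]) (auto simp: le_inf_iff)
    qed
    show "range (\<lambda>a::real\<times>real. {..a}) \<subseteq> Pow UNIV" by simp
    fix Z assume "Z \<in> range (\<lambda>a::real\<times>real. {..a})"
    then obtain s t where Z: "Z = {..(s,t)}" by auto
    show "emeasure N1 Z = emeasure N2 Z"
      unfolding Z using mmU[of s t]
      by (simp add: finite_measure.emeasure_eq_measure[OF prob_space.finite_measure[OF pN1]] finite_measure.emeasure_eq_measure[OF prob_space.finite_measure[OF pN2]])
  next
    show "sets N1 = sigma_sets UNIV (range atMost)" by (simp add: N1_def sP)
    show "sets N2 = sigma_sets UNIV (range atMost)" by (simp add: N2_def sP)
    show "range (\<lambda>i. {..(real i, real i)}) \<subseteq> range atMost" by auto
    show "(\<Union>i. {..(real i, real i)}) = UNIV"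
    proof safe
      fix a b :: real
      obtain n :: nat where "max a b \<le> real n" using real_arch_simple by blast
      then show "(a, b) \<in> (\<Union>i. {..(real i, real i)})" by auto
    qed auto
    fix i show "emeasure N1 {..(real i, real i)} \<noteq> \<infinity>"
      using finite_measure.emeasure_eq_measure[OF prob_space.finite_measure[OF pN1]] by simp
  qed
  define h where "h = (\<lambda>p::real\<times>real. g (fst p) * g (snd p))"
  have hm[measurable]: "h \<in> borel_measurable P" unfolding h_def P_def by measurable
  have hmm: "h (mm p) = h p" for p
    by (cases p) (auto simp: h_def mm_def min_def max_def)
  have I1: "integral\<^sup>L N1 h = (\<integral>\<omega>. g (X \<omega>) * g (Y \<omega>) \<partial>M)"
  proof -
    have "integral\<^sup>L N1 h = (\<integral>p. h (mm p) \<partial>K1)"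
      unfolding N1_def by (rule integral_distr) (simp_all add: K1_def)
    also have "\<dots> = integral\<^sup>L K1 h" by (simp add: hmm)
    also have "\<dots> = (\<integral>\<omega>. h (X \<omega>, Y \<omega>) \<partial>M)"
      unfolding K1_def by (rule integral_distr) simp_all
    finally show ?thesis by (simp add: h_def)
  qed
  have iX: "integrable M (\<lambda>\<omega>. g (X \<omega>))" by (rule square_integrable_imp_integrable[OF _ sqX]) simp
  have iY: "integrable M (\<lambda>\<omega>. g (Y \<omega>))" by (rule square_integrable_imp_integrable[OF _ sqY]) simp
  have iprod: "integrable (M \<Otimes>\<^sub>M M) (\<lambda>(\<omega>, \<omega>'). g (X \<omega>) * g (Y \<omega>'))"
  proof (rule MM.Fubini_integrable)
    show "(\<lambda>(\<omega>, \<omega>'). g (X \<omega>) * g (Y \<omega>')) \<in> borel_measurable (M \<Otimes>\<^sub>M M)" by measurable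
    show "integrable M (\<lambda>x. \<integral>y. norm (case (x, y) of (\<omega>, \<omega>') \<Rightarrow> g (X \<omega>) * g (Y \<omega>')) \<partial>M)"
      using iX iY by (simp add: abs_mult)
    show "AE x in M. integrable M (\<lambda>y. case (x, y) of (\<omega>, \<omega>') \<Rightarrow> g (X \<omega>) * g (Y \<omega>'))"
      using iY by simp
  qed
  have I2: "integral\<^sup>L N2 h = (\<integral>\<omega>. g (X \<omega>) \<partial>M) * (\<integral>\<omega>. g (Y \<omega>) \<partial>M)"
  proof -
    have "integral\<^sup>L N2 h = (\<integral>z. (\<lambda>(\<omega>, \<omega>'). g (X \<omega>) * g (Y \<omega>')) z \<partial>(M \<Otimes>\<^sub>M M))"
    proof -
      have "integral\<^sup>L N2 h = (\<integral>p. h (mm p) \<partial>K2)"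
        unfolding N2_def by (rule integral_distr) (simp_all add: K2_def)
      also have "\<dots> = integral\<^sup>L K2 h" by (simp add: hmm)
      also have "\<dots> = (\<integral>z. h ((\<lambda>(\<omega>, \<omega>'). (X \<omega>, Y \<omega>')) z) \<partial>(M \<Otimes>\<^sub>M M))"
        unfolding K2_def by (rule integral_distr) simp_all
      finally show ?thesis by (simp add: h_def case_prod_beta)
    qed
    also have "\<dots> = (\<integral>\<omega>. (\<integral>\<omega>'. g (X \<omega>) * g (Y \<omega>') \<partial>M) \<partial>M)"
      using MM.integral_fst[OF iprod] by simp
    also have "\<dots> = (\<integral>\<omega>. g (X \<omega>) \<partial>M) * (\<integral>\<omega>. g (Y \<omega>) \<partial>M)"
      by simp
    finally show ?thesis .
  qed
  have iXY: "integrable M (\<lambda>\<omega>. g (X \<omega>) * g (Y \<omega>))"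
  proof (rule Bochner_Integration.integrable_bound[where f="\<lambda>\<omega>. (g (X \<omega>))\<^sup>2 + (g (Y \<omega>))\<^sup>2"])
    show "integrable M (\<lambda>\<omega>. (g (X \<omega>))\<^sup>2 + (g (Y \<omega>))\<^sup>2)" using sqX sqY by simp
    show "(\<lambda>\<omega>. g (X \<omega>) * g (Y \<omega>)) \<in> borel_measurable M" by measurable
    show "AE \<omega> in M. norm (g (X \<omega>) * g (Y \<omega>)) \<le> norm ((g (X \<omega>))\<^sup>2 + (g (Y \<omega>))\<^sup>2)"
      using abs_mult_le_sq by simp
  qed
  show ?thesis
    using cov_eq[OF iX iY iXY] I1 I2 NN by simp
qed

end


theorem theorem1:
  fixes M :: "'a measure" and X Y :: "'a \<Rightarrow> real"
  assumes "prob_space M" and "atomless M"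
    and "L2 M X" and "L2 M Y"
  shows "IC M 0 X Y \<longleftrightarrow> quasi_independent M X Y"
proof -
  interpret prob_space M by fact
  have [measurable]: "X \<in> borel_measurable M" "Y \<in> borel_measurable M"
    using assms(3,4) unfolding L2_def by auto
  show ?thesis
  proof
    assume "IC M 0 X Y"
    then show "quasi_independent M X Y" by (rule IC0_imp_QI) simp_all
  next
    assume qi: "quasi_independent M X Y"
    have "cov M X Y = 0"
      using QI_cov[OF qi, where g="\<lambda>t. t"] assms(3,4) unfolding L2_def by simp
    then have c0: "corr M X Y = 0" unfolding corr_def by simp
    have "corr M (\<lambda>\<omega>. g (X \<omega>)) (\<lambda>\<omega>. g (Y \<omega>)) = 0" if adm: "admissible M X Y g" for g
    proof -
      have [measurable]: "g \<in> borel_measurable borel" using adm unfolding admissible_def by simp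
      have "cov M (\<lambda>\<omega>. g (X \<omega>)) (\<lambda>\<omega>. g (Y \<omega>)) = 0"
        using QI_cov[OF qi, where g=g] adm unfolding admissible_def L2_def by simp
      then show ?thesis unfolding corr_def by simp
    qed
    with c0 assms(3,4) show "IC M 0 X Y" unfolding IC_def by blast
  qed
qed

end
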